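(* Assume (D1): there are $K:E\to(0,\infty)$ bounded on compact sets and $h:[0,\infty)\to[0,\infty)$ with $\int_0^\infty h(t)dt<\infty$ such that $\|P_t(x,\cdot)-\mu(\cdot)\|_{TV}<K(x)h(t)$ for all $x,t$; and (D2): $\mathbb E^x\{K(X_T)\}<\infty$ for all $x\in E$, $T\ge0$. If $\mu(f)<0$ and the set $L=\{x\in E: f(x)\le\mu(f)\}$ is compact, then the zero-potential $q(x)=\limsup_{T\to\infty}\mathbb E^x\{\int_0^T(f(X_s)-\mu(f))ds\}$ is bounded from below.
   Context: $E$ is a locally compact separable metric space in which every closed ball is compact. $(X_t)$ is a right-continuous time-homogeneous (standard) Markov process on $E$ with laws $\mathbb P^x$, expectations $\mathbb E^x$, transition probabilities $P_t(x,\cdot)$, satisfying the weak Feller property $P_t\mathcal C_0\subseteq\mathcal C_0$ ($\mathcal C_0$ continuous bounded functions vanishing at infinity) and ergodicity (a unique probability measure $\mu$ with $\|P_t(x,\cdot)-\mu\|_{TV}\to0$ for all $x$); $\mu(f)=\int f\,d\mu$. $f:E\to\mathbb R$ is continuous and bounded. *)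

theory Defs
  imports "HOL-Probability.Probability"
begin

definition C0 :: "('a::metric_space \<Rightarrow> real) \<Rightarrow> bool" where
  "C0 g \<longleftrightarrow> continuous_on UNIV g \<and> bounded (range g) \<and>
     (\<forall>e>0. \<exists>C. compact C \<and> (\<forall>x. x \<notin> C \<longrightarrow> \<bar>g x\<bar> < e))"

definition tv_dist :: "'a::topological_space measure \<Rightarrow> 'a measure \<Rightarrow> real" where
  "tv_dist P Q = (SUP A\<in>sets (borel :: 'a measure). \<bar>measure P A - measure Q A\<bar>)"

definition trans :: "('a \<Rightarrow> 'w measure) \<Rightarrow> (real \<Rightarrow> 'w \<Rightarrow> 'a::topological_space)
    \<Rightarrow> real \<Rightarrow> 'a \<Rightarrow> 'a measure" where
  "trans Px X t x = distr (Px x) borel (X t)"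

definition stopT :: "'w measure \<Rightarrow> (real \<Rightarrow> 'w set set) \<Rightarrow> ('w \<Rightarrow> real) \<Rightarrow> bool" where
  "stopT M F \<tau> \<longleftrightarrow> (\<forall>\<omega>\<in>space M. 0 \<le> \<tau> \<omega>) \<and>
     (\<forall>t\<ge>0. {\<omega>\<in>space M. \<tau> \<omega> \<le> t} \<in> F t)"

definition F_at :: "'w measure \<Rightarrow> (real \<Rightarrow> 'w set set) \<Rightarrow> ('w \<Rightarrow> real) \<Rightarrow> 'w set set" where
  "F_at M F \<tau> = {A \<in> sets M. \<forall>t\<ge>0. A \<inter> {\<omega>\<in>space M. \<tau> \<omega> \<le> t} \<in> F t}"

definition hit_trunc :: "(real \<Rightarrow> 'w \<Rightarrow> 'a) \<Rightarrow> 'a set \<Rightarrow> real \<Rightarrow> 'w \<Rightarrow> real" where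
  "hit_trunc X C T \<omega> =
     (if \<exists>t\<in>{0..T}. X t \<omega> \<in> C then Inf {t\<in>{0..T}. X t \<omega> \<in> C} else T)"

text \<open>A standard (right-continuous, normal, strong Markov) process on E with laws P^x,
  defined on the measurable sample space M, adapted to a right-continuous filtration F.\<close>
definition standard_markov ::
  "'w measure \<Rightarrow> ('a::topological_space \<Rightarrow> 'w measure) \<Rightarrow> (real \<Rightarrow> 'w set set)
     \<Rightarrow> (real \<Rightarrow> 'w \<Rightarrow> 'a) \<Rightarrow> bool" where
  "standard_markov M Px F X \<longleftrightarrow>
     (\<forall>x. prob_space (Px x) \<and> sets (Px x) = sets M) \<and>
     (\<forall>t\<ge>0. sigma_algebra (space M) (F t) \<and> F t \<subseteq> sets M) \<and>
     (\<forall>s t. 0 \<le> s \<longrightarrow> s \<le> t \<longrightarrow> F s \<subseteq> F t) \<and>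
     (\<forall>t\<ge>0. F t = (\<Inter>s\<in>{t<..}. F s)) \<and>
     (\<forall>t\<ge>0. \<forall>B\<in>sets borel. {\<omega>\<in>space M. X t \<omega> \<in> B} \<in> F t) \<and>
     (\<forall>\<omega>\<in>space M. \<forall>t\<ge>0. continuous (at_right t) (\<lambda>s. X s \<omega>)) \<and>
     (\<forall>x. AE \<omega> in Px x. X 0 \<omega> = x) \<and>
     (\<forall>t\<ge>0. \<forall>A\<in>sets borel. (\<lambda>x. emeasure (trans Px X t x) A) \<in> borel_measurable borel) \<and>
     (\<forall>C T. closed C \<longrightarrow> 0 \<le> T \<longrightarrow> stopT M F (hit_trunc X C T)) \<and>
     (\<forall>x \<tau> t (g::'a \<Rightarrow> real) A. stopT M F \<tau> \<longrightarrow> 0 \<le> t \<longrightarrow>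
        g \<in> borel_measurable borel \<longrightarrow> bounded (range g) \<longrightarrow> A \<in> F_at M F \<tau> \<longrightarrow>
        (\<integral>\<omega>. indicator A \<omega> * g (X (\<tau> \<omega> + t) \<omega>) \<partial>Px x) =
        (\<integral>\<omega>. indicator A \<omega> * (\<integral>y. g y \<partial>trans Px X t (X (\<tau> \<omega>) \<omega>)) \<partial>Px x))"

definition weak_feller :: "('a::metric_space \<Rightarrow> 'w measure) \<Rightarrow> (real \<Rightarrow> 'w \<Rightarrow> 'a) \<Rightarrow> bool" where
  "weak_feller Px X \<longleftrightarrow>
     (\<forall>t\<ge>0. \<forall>g. C0 g \<longrightarrow> C0 (\<lambda>x. \<integral>y. g y \<partial>trans Px X t x))"

definition ergodic_with ::
  "('a::topological_space \<Rightarrow> 'w measure) \<Rightarrow> (real \<Rightarrow> 'w \<Rightarrow> 'a) \<Rightarrow> 'a measure \<Rightarrow> bool" where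
  "ergodic_with Px X mu \<longleftrightarrow>
     (\<forall>\<nu>. (prob_space \<nu> \<and> sets \<nu> = sets borel \<and>
           (\<forall>x. ((\<lambda>t. tv_dist (trans Px X t x) \<nu>) \<longlongrightarrow> 0) at_top)) \<longleftrightarrow> \<nu> = mu)"

definition zero_potential ::
  "('a::topological_space \<Rightarrow> 'w measure) \<Rightarrow> (real \<Rightarrow> 'w \<Rightarrow> 'a) \<Rightarrow> 'a measure \<Rightarrow> ('a \<Rightarrow> real)
     \<Rightarrow> 'a \<Rightarrow> ereal" where
  "zero_potential Px X mu f x =
     Limsup at_top (\<lambda>T. ereal (\<integral>\<omega>. (LINT s:{0..T}|lborel. f (X s \<omega>) - integral\<^sup>L mu f) \<partial>Px x))"

end

theory Submission imports Defs begin

lemma layer: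
  fixes G :: "'a \<Rightarrow> real"
  assumes P: "prob_space P" and Gm[measurable]: "G \<in> borel_measurable P"
    and Gb: "\<And>y. y \<in> space P \<Longrightarrow> 0 \<le> G y \<and> G y \<le> C"
  shows "(\<integral>y. G y \<partial>P) = (\<integral>t. indicator {0..C} t * measure P {y\<in>space P. t < G y} \<partial>lborel)"
    and "integrable lborel (\<lambda>t. indicator {0..C} t * measure P {y\<in>space P. t < G y})"
proof -
  interpret prob_space P by fact
  interpret PL: pair_sigma_finite P lborel
    by (simp add: lborel.sigma_finite_measure_axioms pair_sigma_finite.intro sigma_finite_measure_axioms)
  define H where "H y t = (if 0 \<le> t \<and> t \<le> C \<and> t < G y then 1 else 0::real)" for y t
  have Hm: "(\<lambda>(y,t). H y t) \<in> borel_measurable (P \<Otimes>\<^sub>M lborel)"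
    unfolding H_def by measurable
  have Hint: "integrable (P \<Otimes>\<^sub>M lborel) (\<lambda>(y,t). H y t)"
  proof (rule integrableI_bounded_set[where A="space P \<times> {0..C}" and B=1])
    show "space P \<times> {0..C} \<in> sets (P \<Otimes>\<^sub>M lborel)" by simp
    show "emeasure (P \<Otimes>\<^sub>M lborel) (space P \<times> {0..C}) < \<infinity>"
      by (subst lborel.emeasure_pair_measure_Times) (auto simp: ennreal_mult_less_top emeasure_space_1 emeasure_lborel_Icc_eq)
  qed (use Hm in \<open>auto intro!: AE_I2 simp: H_def space_pair_measure split: if_splits\<close>)
  have i1: "(\<integral>t. H y t \<partial>lborel) = G y" if y: "y \<in> space P" for y
  proof -
    have "(\<lambda>t. H y t) = indicator {0..<G y}"
      using Gb[OF y] by (auto simp: H_def fun_eq_iff split: split_indicator)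
    then show ?thesis using Gb[OF y] by simp
  qed
  have i2: "(\<integral>y. H y t \<partial>P) = indicator {0..C} t * measure P {y\<in>space P. t < G y}" for t
  proof -
    have "(\<integral>y. H y t \<partial>P) = (\<integral>y. indicator {0..C} t * indicator {y\<in>space P. t < G y} y \<partial>P)"
      by (intro Bochner_Integration.integral_cong) (auto simp: H_def split: split_indicator)
    then show ?thesis by (simp add: Int_absorb2)
  qed
  have "(\<integral>y. G y \<partial>P) = (\<integral>y. (\<integral>t. H y t \<partial>lborel) \<partial>P)"
    by (intro Bochner_Integration.integral_cong) (auto simp: i1)
  also have "\<dots> = (\<integral>t. (\<integral>y. H y t \<partial>P) \<partial>lborel)"
    using PL.Fubini_integral[OF Hint] by simp
  finally show "(\<integral>y. G y \<partial>P) = (\<integral>t. indicator {0..C} t * measure P {y\<in>space P. t < G y} \<partial>lborel)"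
    by (simp add: i2)
  show "integrable lborel (\<lambda>t. indicator {0..C} t * measure P {y\<in>space P. t < G y})"
    using PL.integrable_snd[OF Hint] by (simp add: i2)
qed

lemma tv_lower:
  fixes P Q :: "'a::topological_space measure" and g :: "'a \<Rightarrow> real"
  assumes P: "prob_space P" and Q: "prob_space Q"
    and sP: "sets P = sets borel" and sQ: "sets Q = sets borel"
    and gm: "g \<in> borel_measurable borel" and gb: "\<And>y. \<bar>g y\<bar> \<le> B"
  shows "(\<integral>y. g y \<partial>P) - (\<integral>y. g y \<partial>Q) \<ge> - (2 * B * tv_dist P Q)"
proof -
  interpret P: prob_space P by fact
  interpret Q: prob_space Q by fact
  have B0: "0 \<le> B" using gb[of undefined] by simp
  have spP: "space P = UNIV" using sets_eq_imp_space_eq[OF sP] by simp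
  have spQ: "space Q = UNIV" using sets_eq_imp_space_eq[OF sQ] by simp
  define G where "G y = g y + B" for y
  have Gm: "G \<in> borel_measurable borel" unfolding G_def using gm by simp
  have GmP: "G \<in> borel_measurable P"
    by (subst measurable_cong_sets[OF sP refl]) (rule Gm)
  have GmQ: "G \<in> borel_measurable Q"
    by (subst measurable_cong_sets[OF sQ refl]) (rule Gm)
  have Gb: "0 \<le> G y \<and> G y \<le> 2 * B" for y using gb[of y] by (auto simp: G_def abs_le_iff)
  note lP = layer[OF P GmP, of "2*B"] and lQ = layer[OF Q GmQ, of "2*B"]
  have gP: "integrable P g"
  proof (rule P.integrable_const_bound[where B=B])
    show "g \<in> borel_measurable P" by (subst measurable_cong_sets[OF sP refl]) (rule gm)
  qed (use gb in simp)
  have gQ: "integrable Q g"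
  proof (rule Q.integrable_const_bound[where B=B])
    show "g \<in> borel_measurable Q" by (subst measurable_cong_sets[OF sQ refl]) (rule gm)
  qed (use gb in simp)
  have eP: "(\<integral>y. G y \<partial>P) = (\<integral>y. g y \<partial>P) + B"
    unfolding G_def using gP by (simp add: P.prob_space)
  have eQ: "(\<integral>y. G y \<partial>Q) = (\<integral>y. g y \<partial>Q) + B"
    unfolding G_def using gQ by (simp add: Q.prob_space)
  define mP where "mP t = measure P {y\<in>space P. t < G y}" for t
  define mQ where "mQ t = measure Q {y\<in>space Q. t < G y}" for t
  have bdd: "bdd_above ((\<lambda>A. \<bar>measure P A - measure Q A\<bar>) ` sets borel)"
  proof (rule bdd_aboveI2[where M=1])
    fix A
    have "measure P A \<le> 1" "measure Q A \<le> 1" "0 \<le> measure P A" "0 \<le> measure Q A"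
      by (simp_all add: P.prob_le_1 Q.prob_le_1)
    then show "\<bar>measure P A - measure Q A\<bar> \<le> 1" by linarith
  qed
  have dif: "mP t - mQ t \<ge> - tv_dist P Q" for t
  proof -
    have A: "{y. t < G y} \<in> sets borel"
      using Gm[unfolded borel_measurable_iff_greater] by simp
    have "\<bar>measure P {y. t < G y} - measure Q {y. t < G y}\<bar> \<le> tv_dist P Q"
      unfolding tv_dist_def by (rule cSUP_upper[OF A bdd])
    then show ?thesis by (simp add: mP_def mQ_def spP spQ)
  qed
  have lP1: "(\<integral>y. G y \<partial>P) = (\<integral>t. indicator {0..2*B} t * mP t \<partial>lborel)"
    unfolding mP_def by (rule lP(1)) (use Gb in auto)
  have lQ1: "(\<integral>y. G y \<partial>Q) = (\<integral>t. indicator {0..2*B} t * mQ t \<partial>lborel)"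
    unfolding mQ_def by (rule lQ(1)) (use Gb in auto)
  have lP2: "integrable lborel (\<lambda>t. indicator {0..2*B} t * mP t)"
    unfolding mP_def by (rule lP(2)) (use Gb in auto)
  have lQ2: "integrable lborel (\<lambda>t. indicator {0..2*B} t * mQ t)"
    unfolding mQ_def by (rule lQ(2)) (use Gb in auto)
  have i4: "(\<integral>t. indicator {0..2*B} t * (mP t - mQ t) \<partial>lborel) =
      (\<integral>t. indicator {0..2*B} t * mP t \<partial>lborel) - (\<integral>t. indicator {0..2*B} t * mQ t \<partial>lborel)"
    unfolding right_diff_distrib by (rule Bochner_Integration.integral_diff[OF lP2 lQ2])
  have i3: "(\<integral>t. indicator {0..2*B} t * (- tv_dist P Q) \<partial>lborel) \<le> (\<integral>t. indicator {0..2*B} t * (mP t - mQ t) \<partial>lborel)"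
  proof (rule integral_mono)
    show "integrable lborel (\<lambda>t. indicator {0..2*B} t * (- tv_dist P Q))"
      by (intro integrable_mult_left) (simp add: integrable_real_indicator emeasure_lborel_Icc_eq)
    show "integrable lborel (\<lambda>t. indicator {0..2*B} t * (mP t - mQ t))"
      unfolding right_diff_distrib by (rule Bochner_Integration.integrable_diff[OF lP2 lQ2])
    show "indicator {0..2*B} t * (- tv_dist P Q) \<le> indicator {0..2*B} t * (mP t - mQ t)" for t
      using dif[of t] by (simp add: indicator_def)
  qed
  have i5: "(\<integral>t. indicator {0..2*B} t * (- tv_dist P Q) \<partial>lborel) = - (2 * B * tv_dist P Q)"
    using B0 by (simp add: measure_lborel_Icc)
  show ?thesis using eP eQ lP1 lQ1 i3 i4 i5 by linarith
qed


lemma jm: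
  fixes X :: "real \<Rightarrow> 'w \<Rightarrow> 'a::metric_space" and f :: "'a \<Rightarrow> real"
  assumes Xm: "\<And>t. 0 \<le> t \<Longrightarrow> X t \<in> measurable M borel"
    and rc: "\<And>\<omega> t. \<omega> \<in> space M \<Longrightarrow> 0 \<le> t \<Longrightarrow> continuous (at_right t) (\<lambda>s. X s \<omega>)"
    and fc: "continuous_on UNIV f"
  shows "(\<lambda>p. f (X (max 0 (snd p)) (fst p))) \<in> borel_measurable (M \<Otimes>\<^sub>M (borel::real measure))"
proof -
  have fm: "f \<in> borel_measurable borel" using fc by (rule borel_measurable_continuous_onI)
  define tt where "tt n s = (real_of_int \<lfloor>real (Suc n) * max 0 s\<rfloor> + 1) / real (Suc n)" for n s
  define u where "u n = (\<lambda>p. f (X (max 0 ((real_of_int (\<lfloor>real (Suc n) * max 0 (snd p)\<rfloor>) + 1) / real (Suc n))) (fst p)))" for n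
  show ?thesis
  proof (rule borel_measurable_LIMSEQ_real[where u=u])
    fix n
    show "u n \<in> borel_measurable (M \<Otimes>\<^sub>M (borel::real measure))"
      unfolding u_def
    proof (rule measurable_compose_countable[where f="\<lambda>i p. f (X (max 0 ((real_of_int i + 1) / real (Suc n))) (fst p))"])
      fix i :: int
      have "X (max 0 ((real_of_int i + 1) / real (Suc n))) \<in> measurable M borel" by (rule Xm) simp
      then show "(\<lambda>p. f (X (max 0 ((real_of_int i + 1) / real (Suc n))) (fst p))) \<in> borel_measurable (M \<Otimes>\<^sub>M (borel::real measure))"
        using fm by measurable
    next
      show "(\<lambda>p. \<lfloor>real (Suc n) * max 0 (snd p)\<rfloor>) \<in> measurable (M \<Otimes>\<^sub>M (borel::real measure)) (count_space UNIV)"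
        by measurable
    qed
  next
    fix p assume p: "p \<in> space (M \<Otimes>\<^sub>M (borel::real measure))"
    obtain \<omega> s where ps: "p = (\<omega>, s)" by (cases p)
    have \<omega>: "\<omega> \<in> space M" using p ps by (simp add: space_pair_measure)
    define s' where "s' = max 0 s"
    have s'0: "0 \<le> s'" by (simp add: s'_def)
    have lo: "s' < tt n s" and hi: "tt n s \<le> s' + inverse (real (Suc n))" for n
    proof -
      have n: "0 < real (Suc n)" by simp
      have a: "real_of_int \<lfloor>real (Suc n) * s'\<rfloor> \<le> real (Suc n) * s'" by (rule of_int_floor_le)
      have b: "real (Suc n) * s' < real_of_int \<lfloor>real (Suc n) * s'\<rfloor> + 1" by (rule real_of_int_floor_add_one_gt)
      have e1: "real (Suc n) * s' / real (Suc n) = s'" using n by simp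
      have e2: "(real (Suc n) * s' + 1) / real (Suc n) = s' + inverse (real (Suc n))"
        using n by (simp add: field_simps)
      have "real (Suc n) * s' / real (Suc n) < (real_of_int \<lfloor>real (Suc n) * s'\<rfloor> + 1) / real (Suc n)"
        using b n by (rule divide_strict_right_mono)
      then show "s' < tt n s" unfolding tt_def s'_def[symmetric] e1 .
      have "(real_of_int \<lfloor>real (Suc n) * s'\<rfloor> + 1) / real (Suc n) \<le> (real (Suc n) * s' + 1) / real (Suc n)"
        using a n by (intro divide_right_mono) auto
      then show "tt n s \<le> s' + inverse (real (Suc n))" unfolding tt_def s'_def[symmetric] e2 .
    qed
    have tlim: "(\<lambda>n. tt n s) \<longlonglongrightarrow> s'"
    proof (rule tendsto_sandwich[where f="\<lambda>n. s'" and h="\<lambda>n. s' + inverse (real (Suc n))"])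
      show "\<forall>\<^sub>F n in sequentially. s' \<le> tt n s" using lo by (simp add: less_imp_le)
      show "\<forall>\<^sub>F n in sequentially. tt n s \<le> s' + inverse (real (Suc n))" using hi by simp
      show "(\<lambda>n. s' + inverse (real (Suc n))) \<longlonglongrightarrow> s'"
        using tendsto_add[OF tendsto_const LIMSEQ_inverse_real_of_nat, of s'] by simp
    qed simp
    have tat: "filterlim (\<lambda>n. tt n s) (at_right s') sequentially"
      unfolding filterlim_at using lo tlim by (auto intro!: always_eventually)
    have "((\<lambda>t. X t \<omega>) \<longlongrightarrow> X s' \<omega>) (at_right s')"
      using rc[OF \<omega> s'0] by (simp add: continuous_within)
    then have "(\<lambda>n. X (tt n s) \<omega>) \<longlonglongrightarrow> X s' \<omega>"
      using filterlim_compose[OF _ tat] by blast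
    moreover have "isCont f (X s' \<omega>)"
      using fc continuous_on_eq_continuous_at open_UNIV by blast
    ultimately have "(\<lambda>n. f (X (tt n s) \<omega>)) \<longlonglongrightarrow> f (X s' \<omega>)"
      by (rule isCont_tendsto_compose[rotated])
    moreover have "u n p = f (X (tt n s) \<omega>)" for n
      using lo[of n] s'0 unfolding u_def ps tt_def s'_def by simp
    ultimately show "(\<lambda>n. u n p) \<longlonglongrightarrow> f (X (max 0 (snd p)) (fst p))"
      by (simp add: ps s'_def)
  qed
qed


lemma hit_props:
  fixes X :: "real \<Rightarrow> 'w \<Rightarrow> 'a::topological_space"
  assumes T: "0 \<le> T"
  shows hit_range: "0 \<le> hit_trunc X C T \<omega> \<and> hit_trunc X C T \<omega> \<le> T"
    and hit_before: "\<And>s. 0 \<le> s \<Longrightarrow> s < hit_trunc X C T \<omega> \<Longrightarrow> X s \<omega> \<notin> C"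
    and hit_in: "closed C \<Longrightarrow> continuous (at_right (hit_trunc X C T \<omega>)) (\<lambda>s. X s \<omega>)
         \<Longrightarrow> hit_trunc X C T \<omega> < T \<Longrightarrow> X (hit_trunc X C T \<omega>) \<omega> \<in> C"
proof -
  define S where "S = {t\<in>{0..T}. X t \<omega> \<in> C}"
  have bdd: "bdd_below S" unfolding S_def by (rule bdd_belowI[where m=0]) auto
  show "0 \<le> hit_trunc X C T \<omega> \<and> hit_trunc X C T \<omega> \<le> T"
  proof (cases "\<exists>t\<in>{0..T}. X t \<omega> \<in> C")
    case True
    then have ne: "S \<noteq> {}" and h: "hit_trunc X C T \<omega> = Inf S"
      by (auto simp: S_def hit_trunc_def)
    have "0 \<le> Inf S" using ne by (intro cInf_greatest) (auto simp: S_def)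
    moreover have "Inf S \<le> T"
    proof -
      obtain t where "t \<in> S" using ne by auto
      then have "Inf S \<le> t" "t \<le> T" using bdd by (auto intro: cInf_lower simp: S_def)
      then show ?thesis by simp
    qed
    ultimately show ?thesis using h by simp
  qed (use T in \<open>auto simp: hit_trunc_def\<close>)
  show "X s \<omega> \<notin> C" if s0: "0 \<le> s" and sl: "s < hit_trunc X C T \<omega>" for s
  proof
    assume sC: "X s \<omega> \<in> C"
    show False
    proof (cases "\<exists>t\<in>{0..T}. X t \<omega> \<in> C")
      case True
      then have h: "hit_trunc X C T \<omega> = Inf S" by (auto simp: S_def hit_trunc_def)
      have "hit_trunc X C T \<omega> \<le> T" using \<open>0 \<le> hit_trunc X C T \<omega> \<and> hit_trunc X C T \<omega> \<le> T\<close> by simp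
      then have "s \<in> S" using s0 sl sC by (auto simp: S_def)
      then have "Inf S \<le> s" using bdd by (rule cInf_lower)
      then show False using sl h by simp
    next
      case False
      then show False using s0 sl sC by (auto simp: hit_trunc_def)
    qed
  qed
  assume cl: "closed C" and rc: "continuous (at_right (hit_trunc X C T \<omega>)) (\<lambda>s. X s \<omega>)"
    and lt: "hit_trunc X C T \<omega> < T"
  have ex: "\<exists>t\<in>{0..T}. X t \<omega> \<in> C"
    using lt by (auto simp: hit_trunc_def split: if_splits)
  then have ne: "S \<noteq> {}" and h: "hit_trunc X C T \<omega> = Inf S"
    by (auto simp: S_def hit_trunc_def)
  show "X (hit_trunc X C T \<omega>) \<omega> \<in> C"
  proof (rule ccontr)
    assume nC: "X (hit_trunc X C T \<omega>) \<omega> \<notin> C"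
    have "((\<lambda>s. X s \<omega>) \<longlongrightarrow> X (Inf S) \<omega>) (at_right (Inf S))"
      using rc h by (simp add: continuous_within)
    moreover have "open (- C)" using cl by auto
    moreover have "X (Inf S) \<omega> \<in> - C" using nC h by simp
    ultimately have "eventually (\<lambda>s. X s \<omega> \<in> - C) (at_right (Inf S))"
      by (rule topological_tendstoD)
    then obtain b where b: "b > Inf S" "\<And>y. y > Inf S \<Longrightarrow> y < b \<Longrightarrow> X y \<omega> \<in> - C"
      unfolding eventually_at_right[of "Inf S" "Inf S + 1", OF less_add_one] by blast
    obtain t where t: "t \<in> S" "t < b" using cInf_less_iff[OF ne bdd] b(1) by blast
    have "Inf S \<le> t" using t(1) bdd by (rule cInf_lower)
    moreover have "t \<noteq> Inf S" using t(1) nC h by (auto simp: S_def)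
    ultimately have "t > Inf S" by simp
    then have "X t \<omega> \<in> - C" using b(2) t(2) by blast
    then show False using t(1) by (auto simp: S_def)
  qed
qed


theorem lemma2p20:
  fixes M :: "'w measure"
    and Px :: "'a::{heine_borel,second_countable_topology} \<Rightarrow> 'w measure"
    and F :: "real \<Rightarrow> 'w set set"
    and X :: "real \<Rightarrow> 'w \<Rightarrow> 'a"
    and mu :: "'a measure"
    and f :: "'a \<Rightarrow> real"
    and K :: "'a \<Rightarrow> real"
    and h :: "real \<Rightarrow> real"
  assumes proc: "standard_markov M Px F X"
    and feller: "weak_feller Px X"
    and erg: "ergodic_with Px X mu"
    and f_cont: "continuous_on UNIV f"
    and f_bdd: "bounded (range f)"
    and K_pos: "\<forall>x. 0 < K x"
    and K_bdd: "\<forall>C. compact C \<longrightarrow> bounded (K ` C)"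
    and h_nonneg: "\<forall>t\<ge>0. 0 \<le> h t"
    and h_int: "set_integrable lborel {0..} h"
    and D1: "\<forall>x t. 0 \<le> t \<longrightarrow> tv_dist (trans Px X t x) mu < K x * h t"
    and D2: "\<forall>x T. 0 \<le> T \<longrightarrow> integrable (Px x) (\<lambda>\<omega>. K (X T \<omega>))"
    and neg: "integral\<^sup>L mu f < 0"
    and L_compact: "compact {x. f x \<le> integral\<^sup>L mu f}"
  shows "\<exists>c::real. \<forall>x. ereal c \<le> zero_potential Px X mu f x"
proof -
  note sm = proc[unfolded standard_markov_def]
  have s1: "\<forall>x. prob_space (Px x) \<and> sets (Px x) = sets M" using sm by (elim conjE) assumption
  have s2: "\<forall>t\<ge>0. sigma_algebra (space M) (F t) \<and> F t \<subseteq> sets M" using sm by (elim conjE) assumption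
  have s3: "\<forall>s t. 0 \<le> s \<longrightarrow> s \<le> t \<longrightarrow> F s \<subseteq> F t" using sm by (elim conjE) assumption
  have s5: "\<forall>t\<ge>0. \<forall>B\<in>sets borel. {\<omega>\<in>space M. X t \<omega> \<in> B} \<in> F t" using sm by (elim conjE) assumption
  have s6: "\<forall>\<omega>\<in>space M. \<forall>t\<ge>0. continuous (at_right t) (\<lambda>s. X s \<omega>)" using sm by (elim conjE) assumption
  have s9: "\<forall>C T. closed C \<longrightarrow> 0 \<le> T \<longrightarrow> stopT M F (hit_trunc X C T)" using sm by (elim conjE) assumption
  have s10: "\<forall>x \<tau> t (g::'a \<Rightarrow> real) A. stopT M F \<tau> \<longrightarrow> 0 \<le> t \<longrightarrow>
        g \<in> borel_measurable borel \<longrightarrow> bounded (range g) \<longrightarrow> A \<in> F_at M F \<tau> \<longrightarrow>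
        (\<integral>\<omega>. indicator A \<omega> * g (X (\<tau> \<omega> + t) \<omega>) \<partial>Px x) =
        (\<integral>\<omega>. indicator A \<omega> * (\<integral>y. g y \<partial>trans Px X t (X (\<tau> \<omega>) \<omega>)) \<partial>Px x)"
    using sm by (elim conjE) assumption
  have Pp: "\<And>x. prob_space (Px x)" and sPx: "\<And>x. sets (Px x) = sets M" using s1 by auto
  have Fsub: "\<And>t. 0 \<le> t \<Longrightarrow> F t \<subseteq> sets M" using s2 by auto
  have Fmono: "\<And>s t. 0 \<le> s \<Longrightarrow> s \<le> t \<Longrightarrow> F s \<subseteq> F t" using s3 by auto
  have Xad: "\<And>t B. 0 \<le> t \<Longrightarrow> B \<in> sets borel \<Longrightarrow> {\<omega>\<in>space M. X t \<omega> \<in> B} \<in> F t" using s5 by auto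
  have rc: "\<And>\<omega> t. \<omega> \<in> space M \<Longrightarrow> 0 \<le> t \<Longrightarrow> continuous (at_right t) (\<lambda>s. X s \<omega>)" using s6 by auto
  have stop: "\<And>C T. closed C \<Longrightarrow> 0 \<le> T \<Longrightarrow> stopT M F (hit_trunc X C T)" using s9 by auto
  have SM: "\<And>x \<tau> t (g::'a \<Rightarrow> real) A. stopT M F \<tau> \<Longrightarrow> 0 \<le> t \<Longrightarrow>
        g \<in> borel_measurable borel \<Longrightarrow> bounded (range g) \<Longrightarrow> A \<in> F_at M F \<tau> \<Longrightarrow>
        (\<integral>\<omega>. indicator A \<omega> * g (X (\<tau> \<omega> + t) \<omega>) \<partial>Px x) =
        (\<integral>\<omega>. indicator A \<omega> * (\<integral>y. g y \<partial>trans Px X t (X (\<tau> \<omega>) \<omega>)) \<partial>Px x)"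
    using s10 by blast
  have Xm: "X t \<in> measurable M borel" if t: "0 \<le> t" for t
  proof (rule measurableI)
    fix B :: "'a set" assume "B \<in> sets borel"
    then have "{\<omega>\<in>space M. X t \<omega> \<in> B} \<in> sets M" using Xad[OF t] Fsub[OF t] by blast
    then show "X t -` B \<inter> space M \<in> sets M" by (simp add: Int_def conj_commute)
  qed simp
  have mu: "prob_space mu" "sets mu = sets borel"
    using erg[unfolded ergodic_with_def, rule_format, of mu] by simp_all
  have tr: "prob_space (trans Px X t y) \<and> sets (trans Px X t y) = sets borel" if t: "0 \<le> t" for t y
  proof -
    have "X t \<in> measurable (Px y) borel"
      using Xm[OF t] by (subst measurable_cong_sets[OF sPx refl])
    then show ?thesis unfolding trans_def
      by (simp add: prob_space.prob_space_distr[OF Pp])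
  qed
  define m where "m = integral\<^sup>L mu f"
  obtain B0 where B0: "\<And>y. \<bar>f y\<bar> \<le> B0"
    using f_bdd unfolding bounded_iff by auto
  define B where "B = B0 + \<bar>m\<bar>"
  define g where "g y = f y - m" for y
  have gb: "\<bar>g y\<bar> \<le> B" for y using B0[of y] by (simp add: g_def B_def)
  have B_nn: "0 \<le> B" using gb[of undefined] by simp
  have gc: "continuous_on UNIV g" unfolding g_def using f_cont by (intro continuous_intros)
  have gm: "g \<in> borel_measurable borel" using gc by (rule borel_measurable_continuous_onI)
  have fm: "f \<in> borel_measurable borel" using f_cont by (rule borel_measurable_continuous_onI)
  have gbd: "bounded (range g)" unfolding bounded_iff using gb by auto
  have gmu: "(\<integral>y. g y \<partial>mu) = 0"
  proof -
    interpret mu: prob_space mu by (fact mu(1))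
    have fmu: "integrable mu f"
    proof (rule mu.integrable_const_bound[where B=B0])
      show "f \<in> borel_measurable mu" by (subst measurable_cong_sets[OF mu(2) refl]) (rule fm)
    qed (use B0 in simp)
    then show ?thesis unfolding g_def m_def by (simp add: mu.prob_space)
  qed
  define L where "L = {x. f x \<le> m}"
  have Lc: "compact L" using L_compact by (simp add: L_def m_def)
  then have Lcl: "closed L" by (rule compact_imp_closed)
  obtain a where a: "\<And>y. y \<in> L \<Longrightarrow> \<bar>K y\<bar> \<le> a"
    using K_bdd Lc unfolding bounded_iff by fastforce
  define cL where "cL = max 0 a"
  have cL: "\<And>y. y \<in> L \<Longrightarrow> K y \<le> cL" and cL0: "0 \<le> cL"
    using a by (force simp: cL_def)+
  define H where "H = (\<integral>r. indicator {0..} r * h r \<partial>lborel)"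
  have H0: "0 \<le> H" unfolding H_def using h_nonneg by (intro Bochner_Integration.integral_nonneg) (auto simp: indicator_def)
  define c where "c = - (2 * B * cL * H)"
  have c0: "c \<le> 0" unfolding c_def using B_nn cL0 H0 by simp
  have key: "c \<le> (\<integral>\<omega>. (LINT s:{0..T}|lborel. f (X s \<omega>) - m) \<partial>Px x)" if T: "0 \<le> T" for x T
  proof -
    define P where "P = Px x"
    interpret prob_space P unfolding P_def by (rule Pp)
    interpret PL: pair_sigma_finite P lborel
      by (simp add: lborel.sigma_finite_measure_axioms pair_sigma_finite.intro sigma_finite_measure_axioms)
    have sP: "sets P = sets M" unfolding P_def by (rule sPx)
    have spP: "space P = space M" using sets_eq_imp_space_eq[OF sP] .
    define \<tau> where "\<tau> = hit_trunc X L T"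
    have st: "stopT M F \<tau>" unfolding \<tau>_def by (rule stop[OF Lcl T])
    have \<tau>r: "0 \<le> \<tau> \<omega> \<and> \<tau> \<omega> \<le> T" for \<omega> unfolding \<tau>_def by (rule hit_range[OF T])
    have \<tau>set: "{\<omega>\<in>space M. \<tau> \<omega> \<le> t} \<in> F t" if "0 \<le> t" for t
      using st that unfolding stopT_def by blast
    have \<tau>m: "\<tau> \<in> borel_measurable M"
      unfolding borel_measurable_iff_le
    proof
      fix a :: real
      show "{w \<in> space M. \<tau> w \<le> a} \<in> sets M"
      proof (cases "0 \<le> a")
        case True then show ?thesis using \<tau>set[OF True] Fsub[OF True] by blast
      next
        case False
        have "\<not> \<tau> w \<le> a" for w using \<tau>r[of w] False by linarith
        then have e: "{w \<in> space M. \<tau> w \<le> a} = {}" by blast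
        show ?thesis unfolding e by (rule sets.empty_sets)
      qed
    qed
    have \<tau>mP[measurable]: "\<tau> \<in> borel_measurable P" by (subst measurable_cong_sets[OF sP refl]) (rule \<tau>m)
    define Z where "Z = (\<lambda>p. g (X (max 0 (snd p)) (fst p)))"
    have ZM: "Z \<in> borel_measurable (M \<Otimes>\<^sub>M (borel::real measure))"
      unfolding Z_def by (rule jm[OF Xm rc gc])
    have ZP[measurable]: "Z \<in> borel_measurable (P \<Otimes>\<^sub>M lborel)"
      by (subst measurable_cong_sets[OF sets_pair_measure_cong[OF sP sets_lborel] refl]) (rule ZM)
    have Zb: "\<bar>Z p\<bar> \<le> B" for p unfolding Z_def by (rule gb)
    define W where "W \<omega> r = (if 0 \<le> r \<and> r \<le> T \<and> \<tau> \<omega> \<le> T - r then Z (\<omega>, \<tau> \<omega> + r) else 0)" for \<omega> r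
    have WM: "(\<lambda>(\<omega>, r). W \<omega> r) \<in> borel_measurable (P \<Otimes>\<^sub>M lborel)"
      unfolding W_def by measurable
    have Wint: "integrable (P \<Otimes>\<^sub>M lborel) (\<lambda>(\<omega>, r). W \<omega> r)"
    proof (rule integrableI_bounded_set[where A="space P \<times> {0..T}" and B=B])
      show "space P \<times> {0..T} \<in> sets (P \<Otimes>\<^sub>M lborel)" by simp
      show "emeasure (P \<Otimes>\<^sub>M lborel) (space P \<times> {0..T}) < \<infinity>"
        by (subst lborel.emeasure_pair_measure_Times) (auto simp: ennreal_mult_less_top emeasure_space_1 emeasure_lborel_Icc_eq)
    qed (use WM Zb B_nn in \<open>auto intro!: AE_I2 simp: W_def space_pair_measure split: if_splits\<close>)
    define \<Phi> where "\<Phi> \<omega> = (LINT s:{0..T}|lborel. f (X s \<omega>) - m)" for \<omega>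
    define \<Phi>2 where "\<Phi>2 \<omega> = (\<integral>r. W \<omega> r \<partial>lborel)" for \<omega>
    have step1: "\<Phi>2 \<omega> \<le> \<Phi> \<omega>" if \<omega>: "\<omega> \<in> space P" for \<omega>
    proof -
      have \<omega>M: "\<omega> \<in> space M" using \<omega> spP by simp
      have sl[measurable]: "(\<lambda>s. Z (\<omega>, s)) \<in> borel_measurable lborel"
        using measurable_Pair2[OF ZP \<omega>] .
      define V where "V s = (if 0 \<le> s \<and> s \<le> T \<and> \<tau> \<omega> \<le> s then Z (\<omega>, s) else 0)" for s
      define U where "U s = (if 0 \<le> s \<and> s \<le> T then Z (\<omega>, s) else 0)" for s
      have e1: "\<Phi> \<omega> = (\<integral>s. U s \<partial>lborel)"
        unfolding \<Phi>_def set_lebesgue_integral_def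
        by (intro Bochner_Integration.integral_cong) (auto simp: U_def Z_def g_def indicator_def)
      have e2: "\<Phi>2 \<omega> = (\<integral>s. V s \<partial>lborel)"
      proof -
        have "(\<integral>s. V s \<partial>lborel) = \<bar>1\<bar> *\<^sub>R (\<integral>r. V (\<tau> \<omega> + 1 * r) \<partial>lborel)"
          by (rule lborel_integral_real_affine) simp
        also have "\<dots> = (\<integral>r. W \<omega> r \<partial>lborel)"
          using \<tau>r[of \<omega>] by (auto simp: V_def W_def intro!: Bochner_Integration.integral_cong)
        finally show ?thesis unfolding \<Phi>2_def by simp
      qed
      have Vi: "integrable lborel V"
      proof (rule integrableI_bounded_set[where A="{0..T}" and B=B])
        show "V \<in> borel_measurable lborel" unfolding V_def by measurable
      qed (use Zb B_nn in \<open>auto simp: V_def emeasure_lborel_Icc_eq\<close>)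
      have Ui: "integrable lborel U"
      proof (rule integrableI_bounded_set[where A="{0..T}" and B=B])
        show "U \<in> borel_measurable lborel" unfolding U_def by measurable
      qed (use Zb B_nn in \<open>auto simp: U_def emeasure_lborel_Icc_eq\<close>)
      have "V s \<le> U s" for s
      proof (cases "0 \<le> s \<and> s \<le> T \<and> s < \<tau> \<omega>")
        case True
        then have "X s \<omega> \<notin> L" using hit_before[OF T, of s X L \<omega>] by (simp add: \<tau>_def)
        then have "0 \<le> Z (\<omega>, s)" using True by (simp add: Z_def g_def L_def)
        then show ?thesis using True by (simp add: U_def V_def)
      qed (auto simp: U_def V_def)
      then have "(\<integral>s. V s \<partial>lborel) \<le> (\<integral>s. U s \<partial>lborel)"
        by (intro integral_mono Vi Ui)
      then show ?thesis using e1 e2 by simp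
    qed
    have step2: "c \<le> (\<integral>\<omega>. \<Phi>2 \<omega> \<partial>P)"
    proof -
      define bd where "bd r = - (2 * B * cL) * (indicator {0..T} r * h r)" for r
      have inner: "bd r \<le> (\<integral>\<omega>. W \<omega> r \<partial>P)" if r0: "r \<noteq> 0" for r
      proof (cases "0 < r \<and> r \<le> T")
        case False
        then have "r \<notin> {0..T}" using r0 by auto
        then have "W \<omega> r = 0" for \<omega> unfolding W_def by auto
        then show ?thesis using \<open>r \<notin> {0..T}\<close> by (simp add: bd_def)
      next
        case True
        then have r: "0 \<le> r" "r \<le> T" "0 < r" by auto
        define A where "A = {\<omega>\<in>space M. \<tau> \<omega> \<le> T - r}"
        define Pg where "Pg y = (\<integral>z. g z \<partial>trans Px X r y)" for y
        have AF: "A \<in> F_at M F \<tau>"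
          unfolding F_at_def
        proof (intro CollectI conjI allI impI)
          have "A \<in> F (T - r)" unfolding A_def using \<tau>set r by simp
          then show "A \<in> sets M" using Fsub[of "T - r"] r by auto
          fix t :: real assume t: "0 \<le> t"
          have "A \<inter> {\<omega> \<in> space M. \<tau> \<omega> \<le> t} = {\<omega> \<in> space M. \<tau> \<omega> \<le> min (T - r) t}"
            unfolding A_def by auto
          moreover have "{\<omega> \<in> space M. \<tau> \<omega> \<le> min (T - r) t} \<in> F (min (T - r) t)"
            using \<tau>set[of "min (T - r) t"] r t by simp
          moreover have "F (min (T - r) t) \<subseteq> F t" using r t by (intro Fmono) auto
          ultimately show "A \<inter> {\<omega> \<in> space M. \<tau> \<omega> \<le> t} \<in> F t" by auto
        qed
        have eW: "(\<integral>\<omega>. W \<omega> r \<partial>P) = (\<integral>\<omega>. indicator A \<omega> * g (X (\<tau> \<omega> + r) \<omega>) \<partial>P)"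
          using r \<tau>r spP
          by (intro Bochner_Integration.integral_cong) (auto simp: W_def A_def Z_def indicator_def)
        also have "\<dots> = (\<integral>\<omega>. indicator A \<omega> * Pg (X (\<tau> \<omega>) \<omega>) \<partial>P)"
          unfolding P_def Pg_def by (rule SM[OF st r(1) gm gbd AF])
        finally have eW': "(\<integral>\<omega>. W \<omega> r \<partial>P) = (\<integral>\<omega>. indicator A \<omega> * Pg (X (\<tau> \<omega>) \<omega>) \<partial>P)" .
        have hr: "0 \<le> h r" using h_nonneg r by auto
        have bdr: "bd r = - (2 * B * cL * h r)" using r by (simp add: bd_def)
        have pw: "- (2 * B * cL * h r) \<le> indicator A \<omega> * Pg (X (\<tau> \<omega>) \<omega>)" if \<omega>: "\<omega> \<in> space M" for \<omega>
        proof (cases "\<omega> \<in> A")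
          case False
          then show ?thesis using B_nn cL0 hr by simp
        next
          case True
          then have lt: "\<tau> \<omega> < T" using r unfolding A_def by auto
          have yL: "X (\<tau> \<omega>) \<omega> \<in> L"
            using hit_in[OF T, of L X \<omega>] Lcl rc[OF \<omega>, of "\<tau> \<omega>"] \<tau>r[of \<omega>] lt by (simp add: \<tau>_def)
          define y where "y = X (\<tau> \<omega>) \<omega>"
          have trp: "prob_space (trans Px X r y)" "sets (trans Px X r y) = sets borel" using tr[OF r(1)] by auto
          have "(\<integral>z. g z \<partial>trans Px X r y) - (\<integral>z. g z \<partial>mu) \<ge> - (2 * B * tv_dist (trans Px X r y) mu)"
            by (rule tv_lower[OF trp(1) mu(1) trp(2) mu(2) gm gb])
          then have a1: "Pg y \<ge> - (2 * B * tv_dist (trans Px X r y) mu)" using gmu by (simp add: Pg_def)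
          have "tv_dist (trans Px X r y) mu < K y * h r" using D1 r by auto
          also have "K y * h r \<le> cL * h r" using cL[OF yL[folded y_def]] hr by (rule mult_right_mono)
          finally have "tv_dist (trans Px X r y) mu \<le> cL * h r" by simp
          then have "2 * B * tv_dist (trans Px X r y) mu \<le> 2 * B * (cL * h r)"
            using B_nn by (intro mult_left_mono) auto
          then show ?thesis using a1 True by (simp add: y_def)
        qed
        show ?thesis
        proof (cases "integrable P (\<lambda>\<omega>. indicator A \<omega> * Pg (X (\<tau> \<omega>) \<omega>))")
          case True
          have "(\<integral>\<omega>. - (2 * B * cL * h r) \<partial>P) \<le> (\<integral>\<omega>. indicator A \<omega> * Pg (X (\<tau> \<omega>) \<omega>) \<partial>P)"
            by (rule integral_mono[OF _ True]) (use pw spP in auto)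
          then show ?thesis using eW' bdr by (simp add: prob_space)
        next
          case False
          then show ?thesis using eW' bdr B_nn cL0 hr by (simp add: not_integrable_integral_eq)
        qed
      qed
      have bdi: "integrable lborel bd"
      proof -
        have "set_integrable lborel {0..T} h"
          by (rule set_integrable_subset[OF h_int]) auto
        then show ?thesis unfolding bd_def set_integrable_def by simp
      qed
      have "(\<integral>r. bd r \<partial>lborel) \<le> (\<integral>r. (\<integral>\<omega>. W \<omega> r \<partial>P) \<partial>lborel)"
      proof (rule integral_mono_AE[OF bdi])
        show "integrable lborel (\<lambda>r. \<integral>\<omega>. W \<omega> r \<partial>P)" using PL.integrable_snd[OF Wint] by simp
        show "AE r in lborel. bd r \<le> (\<integral>\<omega>. W \<omega> r \<partial>P)"
          using AE_lborel_singleton[of 0] by eventually_elim (rule inner)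
      qed
      also have "\<dots> = (\<integral>\<omega>. \<Phi>2 \<omega> \<partial>P)"
        unfolding \<Phi>2_def by (rule PL.Fubini_integral[OF Wint])
      finally have a1: "(\<integral>r. bd r \<partial>lborel) \<le> (\<integral>\<omega>. \<Phi>2 \<omega> \<partial>P)" .
      have "(\<integral>r. indicator {0..T} r * h r \<partial>lborel) \<le> H"
        unfolding H_def
      proof (rule integral_mono)
        show "integrable lborel (\<lambda>r. indicator {0..} r * h r)" using h_int by (simp add: set_integrable_def)
        have "set_integrable lborel {0..T} h"
          by (rule set_integrable_subset[OF h_int]) auto
        then show "integrable lborel (\<lambda>r. indicator {0..T} r * h r)" by (simp add: set_integrable_def)
        show "indicator {0..T} r * h r \<le> indicator {0..} r * h r" for r
          using h_nonneg by (auto simp: indicator_def)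
      qed
      then have "2 * B * cL * (\<integral>r. indicator {0..T} r * h r \<partial>lborel) \<le> 2 * B * cL * H"
        using B_nn cL0 by (intro mult_left_mono) auto
      moreover have "(\<integral>r. bd r \<partial>lborel) = - (2 * B * cL) * (\<integral>r. indicator {0..T} r * h r \<partial>lborel)"
        unfolding bd_def by simp
      ultimately show ?thesis using a1 unfolding c_def by simp
    qed
    show ?thesis
    proof (cases "integrable P \<Phi>")
      case True
      have "(\<integral>\<omega>. \<Phi>2 \<omega> \<partial>P) \<le> (\<integral>\<omega>. \<Phi> \<omega> \<partial>P)"
      proof (rule integral_mono[OF _ True])
        show "integrable P \<Phi>2" unfolding \<Phi>2_def using PL.integrable_fst[OF Wint] by simp
      qed (rule step1)
      then show ?thesis using step2 unfolding \<Phi>_def[abs_def] P_def by simp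
    next
      case False
      then have "\<not> integrable (Px x) (\<lambda>\<omega>. (LINT s:{0..T}|lborel. f (X s \<omega>) - m))"
        unfolding \<Phi>_def[abs_def] P_def .
      then show ?thesis using c0 by (simp add: not_integrable_integral_eq)
    qed
  qed
  show ?thesis
  proof (intro exI allI)
    fix x
    show "ereal c \<le> zero_potential Px X mu f x"
      unfolding zero_potential_def
    proof (rule le_Limsup)
      show "\<forall>\<^sub>F T in at_top. ereal c \<le> ereal (\<integral>\<omega>. (LINT s:{0..T}|lborel. f (X s \<omega>) - integral\<^sup>L mu f) \<partial>Px x)"
        unfolding eventually_at_top_linorder using key by (auto simp: m_def)
    qed simp
  qed
qed

end
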